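(* Let $U$ be a one-dimensional quantum walk with one defect. Then $U$ is unitary equivalent to \begin{align*} U_{r_\pm,r_0,\nu_1,\nu_2}={}&|e_1^{-1}\rangle\langle r_0e_1^0+e^{i\nu_1}s_0e_2^0|+|e_2^{1}\rangle\langle -e^{i\nu_2}s_0e_1^0+e^{i(\nu_1+\nu_2)}r_0e_2^0|\\ &+\sum_{n\in\mathbb Z\setminus\{0\}}|e_1^{n-1}\rangle\langle r_\pm e_1^n+s_\pm e_2^n|+|e_2^{n+1}\rangle\langle -s_\pm e_1^n+r_\pm e_2^n| \end{align*} for some $0\le r_\pm,r_0\le1$ and $\nu_1,\nu_2\in\mathbb R$, where $s_\varepsilon=\sqrt{1-r_\varepsilon^2}$ ($\varepsilon=\pm,0$). Moreover, writing $U_{r,\nu}=U_{r_\pm,r_0,\nu_1,\nu_2}$, if $0<r_\varepsilon,r'_\varepsilon<1$ and $\nu_i,\nu'_i\in[0,2\pi)$, then $U_{r,\nu}$ and $U_{r',\nu'}$ are unitary equivalent if and only if $r=r'$ and $\nu=\nu'$.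
   Context: Let $\mathcal H_n=\mathbb C^2$ for $n\in\mathbb Z$, $\mathcal H=\bigoplus_{n\in\mathbb Z}\mathcal H_n$, $P_n$ the orthogonal projection onto $\mathcal H_n$, and $\{e_1^n,e_2^n\}$ the standard basis of $\mathcal H_n$; each $\mathcal H_n$ is identified with $\mathbb C^2$. Dirac notation: $|x\rangle\langle y|$ is the operator $z\mapsto\langle y,z\rangle x$ (inner product conjugate-linear in the first argument). A one-dimensional quantum walk is a unitary $U$ on $\mathcal H$ with $\operatorname{rank}(P_nUP_m)=1$ if $m=n\pm1$ and $0$ otherwise. Every such $U$ can be written as $U=\sum_{n\in\mathbb Z}|\xi_{n-1,n}\rangle\langle\zeta_{n-1,n}|+|\xi_{n+1,n}\rangle\langle\zeta_{n+1,n}|$, where $\{\xi_{n,n+1},\xi_{n+1,n}\}_{n}$ and $\{\zeta_{n,n+1},\zeta_{n+1,n}\}_{n}$ are orthonormal bases of $\mathcal H$ with $\xi_{n,n+1},\zeta_{n+1,n}\in\mathcal H_n$ and $\xi_{n+1,n},\zeta_{n,n+1}\in\mathcal H_{n+1}$. $U$ is a one-dimensional quantum walk with one defect if it has such a representation for which there exist $\xi_1,\xi_2,\zeta_1,\zeta_2\in\mathbb C^2$ with $\xi_{n,n+1}=\xi_1$, $\xi_{n,n-1}=\xi_2$, $\zeta_{n-1,n}=\zeta_1$, $\zeta_{n+1,n}=\zeta_2$ for all $n\in\mathbb Z\setminus\{0\}$. Since $U$ and $e^{i\lambda}U$ are identified, unitaries $U_1,U_2$ on $\mathcal H$ are called unitary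 equivalent if there exist $\lambda\in\mathbb R$ and a unitary $W=\bigoplus_nW_n$ ($W_n$ unitary on $\mathcal H_n$) with $e^{i\lambda}WU_1W^*=U_2$. *)

theory Defs
  imports "HOL-Analysis.Analysis"
begin

text \<open>The Hilbert space H = (+)_{n in Z} C^2.  An operator T on H whose block matrix
  P_n T P_m (viewed as a map H_m -> H_n = C^2 -> C^2) vanishes unless |n - m| = 1 is
  represented by its block function  T :: int => int => complex^2^2, T n m = P_n T P_m.\<close>

type_synonym blockop = "int \<Rightarrow> int \<Rightarrow> complex^2^2"

definition e1 :: "complex^2" where "e1 = axis 1 1"
definition e2 :: "complex^2" where "e2 = axis 2 1"

definition cinner :: "complex^2 \<Rightarrow> complex^2 \<Rightarrow> complex" where
  "cinner x y = (\<Sum>i\<in>UNIV. cnj (x $ i) * y $ i)"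

text \<open>Dirac notation |x><y| : z |-> <y,z> x.\<close>
definition ketbra :: "complex^2 \<Rightarrow> complex^2 \<Rightarrow> complex^2^2" where
  "ketbra x y = (\<chi> i j. x $ i * cnj (y $ j))"

definition adj :: "complex^2^2 \<Rightarrow> complex^2^2" where
  "adj A = (\<chi> i j. cnj (A $ j $ i))"

definition unitary2 :: "complex^2^2 \<Rightarrow> bool" where
  "unitary2 W \<longleftrightarrow> adj W ** W = mat 1 \<and> W ** adj W = mat 1"

definition onb2 :: "complex^2 \<Rightarrow> complex^2 \<Rightarrow> bool" where
  "onb2 x y \<longleftrightarrow> cinner x x = 1 \<and> cinner y y = 1 \<and> cinner x y = 0"

text \<open>Unitarity of an operator on H whose blocks vanish unless |n-m| = 1:
  U^*U = I and UU^* = I, blockwise (the block sums are finite).\<close>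
definition nn_unitary :: "blockop \<Rightarrow> bool" where
  "nn_unitary U \<longleftrightarrow>
     (\<forall>n m. (\<Sum>k\<in>{m - 1, m + 1}. adj (U k n) ** U k m) = (if n = m then mat 1 else 0)) \<and>
     (\<forall>n m. (\<Sum>k\<in>{m - 1, m + 1}. U n k ** adj (U m k)) = (if n = m then mat 1 else 0))"

definition qw :: "blockop \<Rightarrow> bool" where
  "qw U \<longleftrightarrow> (\<forall>n m. rank (U n m) = (if m = n + 1 \<or> m = n - 1 then 1 else 0)) \<and> nn_unitary U"

text \<open>One defect.  a n = xi_{n,n+1}, b n = xi_{n,n-1} (in H_n); c n = zeta_{n-1,n},
  d n = zeta_{n+1,n} (in H_n).  The families being orthonormal bases of H with the stated
  locations amounts to {a n, b n} and {c n, d n} being orthonormal bases of H_n = C^2.\<close>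
definition qw_one_defect :: "blockop \<Rightarrow> bool" where
  "qw_one_defect U \<longleftrightarrow> qw U \<and>
     (\<exists>a b c d :: int \<Rightarrow> complex^2.
        (\<forall>n. onb2 (a n) (b n)) \<and> (\<forall>n. onb2 (c n) (d n)) \<and>
        (\<forall>n m. U n m = (if n = m - 1 then ketbra (a n) (c m)
                        else if n = m + 1 then ketbra (b n) (d m) else 0)) \<and>
        (\<exists>\<xi>1 \<xi>2 \<zeta>1 \<zeta>2. \<forall>n. n \<noteq> 0 \<longrightarrow>
             a n = \<xi>1 \<and> b n = \<xi>2 \<and> c n = \<zeta>1 \<and> d n = \<zeta>2))"

definition unit_equiv :: "blockop \<Rightarrow> blockop \<Rightarrow> bool" where
  "unit_equiv U1 U2 \<longleftrightarrow> (\<exists>(th::real) (W :: int \<Rightarrow> complex^2^2). (\<forall>n. unitary2 (W n)) \<and>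
     (\<forall>n m. mat (cis th) ** W n ** U1 n m ** adj (W m) = U2 n m))"

definition sfun :: "real \<Rightarrow> real" where "sfun r = sqrt (1 - r\<^sup>2)"

definition Ustd :: "real \<Rightarrow> real \<Rightarrow> real \<Rightarrow> real \<Rightarrow> blockop" where
  "Ustd rpm r0 \<nu>1 \<nu>2 = (\<lambda>n m.
     if m = 0 then
       (if n = -1 then ketbra e1 (of_real r0 *s e1 + (cis \<nu>1 * of_real (sfun r0)) *s e2)
        else if n = 1 then ketbra e2 ((- cis \<nu>2 * of_real (sfun r0)) *s e1 + (cis (\<nu>1 + \<nu>2) * of_real r0) *s e2)
        else 0)
     else
       (if n = m - 1 then ketbra e1 (of_real rpm *s e1 + of_real (sfun rpm) *s e2)
        else if n = m + 1 then ketbra e2 ((- of_real (sfun rpm)) *s e1 + of_real rpm *s e2)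
        else 0))"

end

theory Submission
  imports Defs
begin


lemma two_ne[simp]: "(1::2) \<noteq> 2" "(2::2) \<noteq> 1" by simp_all

lemma e_simps[simp]: "e1 $ 1 = 1" "e1 $ 2 = 0" "e2 $ 1 = 0" "e2 $ 2 = 1"
  by (simp_all add: e1_def e2_def axis_def)

lemma ketbra_entry[simp]: "ketbra x y $ i $ j = x $ i * cnj (y $ j)"
  by (simp add: ketbra_def)

lemma adj_entry[simp]: "adj A $ i $ j = cnj (A $ j $ i)"
  by (simp add: adj_def)

lemma cinner2: "cinner x y = cnj (x$1) * y$1 + cnj (x$2) * y$2"
  by (simp add: cinner_def sum_2)

lemma mat_entry: "(mat c :: complex^2^2) $ i $ j = (if i = j then c else 0)"
  by (simp add: mat_def)

lemma mv2: "((W::complex^2^2) *v x) $ i = W$i$1 * x$1 + W$i$2 * x$2"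
  by (simp add: matrix_vector_mult_def sum_2)

lemma mm2: "((A::complex^2^2) ** B) $ i $ j = A$i$1 * B$1$j + A$i$2 * B$2$j"
  by (simp add: matrix_matrix_mult_def sum_2)

lemma entry_main:
  fixes W V :: "complex^2^2"
  shows "(mat t ** W ** ketbra x y ** adj V) $ i $ j = t * (W *v x) $ i * cnj ((V *v y) $ j)"
  using exhaust_2[of i] by (auto simp add: mm2 mv2 mat_entry algebra_simps)

lemma mat_eq2: "(A::complex^2^2) = B \<longleftrightarrow> A$1$1 = B$1$1 \<and> A$1$2 = B$1$2 \<and> A$2$1 = B$2$1 \<and> A$2$2 = B$2$2"
  by (auto simp: vec_eq_iff forall_2)

lemma vec_eq2: "(u::complex^2) = v \<longleftrightarrow> u$1 = v$1 \<and> u$2 = v$2"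
  by (auto simp: vec_eq_iff forall_2)

lemma onb2_complete:
  assumes "onb2 a b"
  shows "a$1*cnj(a$1) + b$1*cnj(b$1) = 1" "a$2*cnj(a$2) + b$2*cnj(b$2) = 1"
        "a$1*cnj(a$2) + b$1*cnj(b$2) = 0" "a$2*cnj(a$1) + b$2*cnj(b$1) = 0"
proof -
  define M :: "complex^2^2" where "M = (\<chi> i j. if i = 1 then cnj (a$j) else cnj (b$j))"
  have "M ** adj M = mat 1"
  proof -
    have "cnj (cinner a b) = 0" using assms unfolding onb2_def by simp
    thus ?thesis using assms unfolding onb2_def
    by (simp add: mat_eq2 mm2 M_def mat_entry cinner2 cinner_def algebra_simps)
  qed
  hence "adj M ** M = mat 1" using matrix_left_right_inverse by blast
  hence e: "(adj M ** M) $ i $ j = (mat 1::complex^2^2) $ i $ j" for i j by simp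
  show "a$1*cnj(a$1) + b$1*cnj(b$1) = 1" using e[of 1 1] by (simp add: mm2 M_def mat_entry)
  show "a$2*cnj(a$2) + b$2*cnj(b$2) = 1" using e[of 2 2] by (simp add: mm2 M_def mat_entry)
  show "a$1*cnj(a$2) + b$1*cnj(b$2) = 0" using e[of 1 2] by (simp add: mm2 M_def mat_entry)
  show "a$2*cnj(a$1) + b$2*cnj(b$1) = 0" using e[of 2 1] by (simp add: mm2 M_def mat_entry)
qed

lemma parseval:
  assumes "onb2 a b"
  shows "cnj (cinner a u) * cinner a v + cnj (cinner b u) * cinner b v = cinner u v"
proof -
  note h = onb2_complete[OF assms]
  have "cnj (cinner a u) * cinner a v + cnj (cinner b u) * cinner b v =
     cnj(u$1)* v$1*(a$1*cnj(a$1) + b$1*cnj(b$1)) + cnj(u$2)* v$2*(a$2*cnj(a$2) + b$2*cnj(b$2))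
     + cnj(u$1)* v$2*(a$1*cnj(a$2) + b$1*cnj(b$2)) + cnj(u$2)* v$1*(a$2*cnj(a$1) + b$2*cnj(b$1))"
    by (simp add: cinner2 algebra_simps)
  also have "\<dots> = cinner u v" by (simp add: h cinner2)
  finally show ?thesis .
qed

lemma cnj_mult_self: "cnj z * z = of_real ((cmod z)^2)"
  by (metis complex_norm_square mult.commute)

lemma gram:
  assumes ab: "onb2 a b" and cd: "onb2 c d"
  shows "cmod (cinner a c) ^2 + cmod (cinner b c) ^2 = 1"
    "cinner a d = - cnj (cinner b c) * (cinner a c * cinner b d - cinner b c * cinner a d)"
    "cinner b d = cnj (cinner a c) * (cinner a c * cinner b d - cinner b c * cinner a d)"
    "cmod (cinner a c * cinner b d - cinner b c * cinner a d) = 1"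
proof -
  define x where "x = cinner a c"
  define y where "y = cinner b c"
  define z where "z = cinner a d"
  define w where "w = cinner b d"
  define \<delta> where "\<delta> = x * w - y * z"
  have p1: "cnj x * x + cnj y * y = 1" using parseval[OF ab, of c c] cd
    by (simp add: x_def y_def onb2_def)
  have p2: "cnj x * z + cnj y * w = 0" using parseval[OF ab, of c d] cd
    by (simp add: x_def y_def z_def w_def onb2_def)
  have p3: "cnj z * z + cnj w * w = 1" using parseval[OF ab, of d d] cd
    by (simp add: z_def w_def onb2_def)
  have p2': "cnj y * w = - (cnj x * z)" using p2 by (simp add: eq_neg_iff_add_eq_0 add.commute)
  have "- cnj y * \<delta> = x * (-(cnj y * w)) + cnj y * y * z" by (simp add: \<delta>_def algebra_simps)
  also have "\<dots> = z * (cnj x * x + cnj y * y)" unfolding p2' by (simp add: algebra_simps)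
  finally have zz: "z = - cnj y * \<delta>" using p1 by simp
  have "cnj x * \<delta> = x * cnj x * w + (-(cnj x * z)) * y" by (simp add: \<delta>_def algebra_simps)
  also have "\<dots> = w * (cnj x * x + cnj y * y)" unfolding p2'[symmetric] by (simp add: algebra_simps)
  finally have ww: "w = cnj x * \<delta>" using p1 by simp
  have "cnj \<delta> * \<delta> * (cnj x * x + cnj y * y) = cnj z * z + cnj w * w"
    unfolding zz ww by (simp add: algebra_simps)
  hence "cnj \<delta> * \<delta> = 1" using p1 p3 by simp
  hence "(cmod \<delta>)^2 = 1" unfolding cnj_mult_self by (metis of_real_eq_1_iff)
  thus "cmod (cinner a c * cinner b d - cinner b c * cinner a d) = 1"
    unfolding \<delta>_def x_def y_def z_def w_def by (smt (verit) norm_ge_zero power2_eq_1_iff)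
  show "cinner a d = - cnj (cinner b c) * (cinner a c * cinner b d - cinner b c * cinner a d)"
    using zz unfolding \<delta>_def x_def y_def z_def w_def .
  show "cinner b d = cnj (cinner a c) * (cinner a c * cinner b d - cinner b c * cinner a d)"
    using ww unfolding \<delta>_def x_def y_def z_def w_def .
  have "of_real ((cmod x)^2 + (cmod y)^2) = (1::complex)" using p1 unfolding cnj_mult_self by simp
  thus "cmod (cinner a c) ^2 + cmod (cinner b c) ^2 = 1" unfolding x_def y_def
    by (metis of_real_eq_1_iff)
qed

definition Wm :: "complex \<Rightarrow> complex \<Rightarrow> complex^2 \<Rightarrow> complex^2 \<Rightarrow> complex^2^2" where
  "Wm p q a b = (\<chi> i j. if i = 1 then p * cnj (a$j) else q * cnj (b$j))"

lemma Wm_mv: "(Wm p q a b *v v) $ 1 = p * cinner a v" "(Wm p q a b *v v) $ 2 = q * cinner b v"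
  by (simp_all add: Wm_def mv2 cinner2 algebra_simps)

lemma unit_cnj: "cmod p = 1 \<Longrightarrow> cnj p * p = 1"
  by (simp add: cnj_mult_self)

lemma onb2_ba: "onb2 a b \<Longrightarrow> cinner b a = 0"
proof -
  assume "onb2 a b"
  hence "cnj (cinner a b) = 0" by (simp add: onb2_def)
  thus ?thesis by (simp add: cinner2 mult.commute)
qed

lemma Wm_unitary:
  assumes ab: "onb2 a b" and p: "cmod p = 1" and q: "cmod q = 1"
  shows "unitary2 (Wm p q a b)"
proof -
  have pp: "p * cnj p = 1" "q * cnj q = 1" using unit_cnj[OF p] unit_cnj[OF q] by (simp_all add: mult.commute)
  have e: "(Wm p q a b ** adj (Wm p q a b))$1$1 = p * cnj p * cinner a a"
     "(Wm p q a b ** adj (Wm p q a b))$1$2 = p * cnj q * cinner a b"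
     "(Wm p q a b ** adj (Wm p q a b))$2$1 = q * cnj p * cinner b a"
     "(Wm p q a b ** adj (Wm p q a b))$2$2 = q * cnj q * cinner b b"
    by (simp_all add: mm2 Wm_def cinner2 algebra_simps)
  have "Wm p q a b ** adj (Wm p q a b) = mat 1"
    unfolding mat_eq2 e using ab pp onb2_ba[OF ab] by (simp add: onb2_def mat_entry)
  thus ?thesis unfolding unitary2_def using matrix_left_right_inverse by blast
qed

lemma polar: "z = complex_of_real (cmod z) * cis (Arg z)"
  by (metis rcis_cmod_Arg rcis_def)

lemma phase_eq:
  assumes "X = complex_of_real R * cis \<psi>" "T = complex_of_real R * cis \<psi>'"
    "th + p - q - \<psi> = - \<psi>'"
  shows "cis th * cis p * cnj (cis q * X) = cnj T"
proof -
  have "cis th * cis p * cnj (cis q * X) = complex_of_real R * cis (th + p - q - \<psi>)"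
  proof -
    have "cis (th + p - q - \<psi>) = cis th * cis p * cis (-q) * cis (-\<psi>)"
      by (simp add: cis_mult)
    thus ?thesis using assms(1) by (simp add: cis_cnj algebra_simps)
  qed
  also have "\<dots> = cnj T" using assms(2,3) by (simp add: cis_cnj)
  finally show ?thesis .
qed

lemma minus_polar: "- (complex_of_real R * cis \<psi>) = complex_of_real R * cis (\<psi> + pi)"
  by (metis minus_cis mult_minus_right)

lemma phase_eq2:
  assumes "X = complex_of_real R * cis \<psi>" "T = complex_of_real R * cis \<psi>'"
    "\<psi>' = q + \<psi> - p - th"
  shows "cnj (cis p) * (cnj (cis th) * (cis q * X)) = T"
proof -
  have "cis \<psi>' = cis (-p) * cis (-th) * cis q * cis \<psi>" using assms(3) by (simp add: cis_mult) (simp add: algebra_simps)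
  thus ?thesis using assms(1,2) by (simp add: cis_cnj algebra_simps)
qed

lemma lhs_form:
  fixes W V :: "complex^2^2"
  shows "mat s ** W ** ketbra x y ** adj V = ketbra (W *v x) (cnj s *s (V *v y))"
  by (simp add: mat_eq2 entry_main)

lemma ketbra_smult: "ketbra (s *s x) y = ketbra x (cnj s *s y)"
  by (simp add: ketbra_def vec_eq_iff algebra_simps)

lemma sfun_eq: "(cmod x)^2 + (cmod y)^2 = 1 \<Longrightarrow> sfun (cmod x) = cmod y"
proof -
  assume "(cmod x)^2 + (cmod y)^2 = 1"
  hence "1 - (cmod x)^2 = (cmod y)^2" by linarith
  thus ?thesis by (simp add: sfun_def)
qed

lemma cnj_polar: "cnj z = complex_of_real (cmod z) * cis (- Arg z)"
  by (subst (1) polar) (simp add: cis_cnj)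



lemma part1:
  assumes "qw_one_defect U"
  shows "\<exists>rpm r0 \<nu>1 \<nu>2. 0 \<le> rpm \<and> rpm \<le> 1 \<and> 0 \<le> r0 \<and> r0 \<le> 1 \<and>
                unit_equiv U (Ustd rpm r0 \<nu>1 \<nu>2)"
proof -
  from assms have "\<exists>a b c d :: int \<Rightarrow> complex^2.
        (\<forall>n. onb2 (a n) (b n)) \<and> (\<forall>n. onb2 (c n) (d n)) \<and>
        (\<forall>n m. U n m = (if n = m - 1 then ketbra (a n) (c m)
                        else if n = m + 1 then ketbra (b n) (d m) else 0)) \<and>
        (\<exists>\<xi>1 \<xi>2 \<zeta>1 \<zeta>2. \<forall>n. n \<noteq> 0 \<longrightarrow>
             a n = \<xi>1 \<and> b n = \<xi>2 \<and> c n = \<zeta>1 \<and> d n = \<zeta>2)"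
    unfolding qw_one_defect_def by (rule conjunct2)
  then obtain a b c d \<xi>1 \<xi>2 \<zeta>1 \<zeta>2 where ab0: "\<forall>n. onb2 (a n) (b n)" and cd0: "\<forall>n. onb2 (c n) (d n)"
    and U0: "\<forall>n m. U n m = (if n = m - 1 then ketbra (a n) (c m)
                        else if n = m + 1 then ketbra (b n) (d m) else 0)"
    and bk1: "\<forall>n. n \<noteq> 0 \<longrightarrow>
             a n = \<xi>1 \<and> b n = \<xi>2 \<and> c n = \<zeta>1 \<and> d n = \<zeta>2"
    by (elim exE conjE) (rule that, assumption+)
  have bk0: "\<And>n. n \<noteq> 0 \<Longrightarrow> a n = \<xi>1 \<and> b n = \<xi>2 \<and> c n = \<zeta>1 \<and> d n = \<zeta>2"
    using bk1 by blast
  have ab: "\<And>n. onb2 (a n) (b n)" using ab0 by blast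
  have cd: "\<And>n. onb2 (c n) (d n)" using cd0 by blast
  have U: "\<And>n m. U n m = (if n = m - 1 then ketbra (a n) (c m)
                        else if n = m + 1 then ketbra (b n) (d m) else 0)" using U0 by blast
  have bk: "a n = a 1" "b n = b 1" "c n = c 1" "d n = d 1" if "n \<noteq> 0" for n
    using bk0[OF that] bk0[of 1] by auto
  define x where "x = cinner (a 1) (c 1)"
  define y where "y = cinner (b 1) (c 1)"
  define z where "z = cinner (a 1) (d 1)"
  define w where "w = cinner (b 1) (d 1)"
  define \<delta> where "\<delta> = x * w - y * z"
  define A where "A = cinner (a 0) (c 0)"
  define B where "B = cinner (b 0) (c 0)"
  define C where "C = cinner (a 0) (d 0)"
  define D where "D = cinner (b 0) (d 0)"
  define \<delta>0 where "\<delta>0 = A * D - B * C"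
  note g = gram[OF ab[of 1] cd[of 1], folded x_def y_def z_def w_def, folded \<delta>_def]
  note g0 = gram[OF ab[of 0] cd[of 0], folded A_def B_def C_def D_def, folded \<delta>0_def]
  define \<alpha> where "\<alpha> = Arg x"
  define \<beta> where "\<beta> = Arg y"
  define dd where "dd = Arg \<delta>"
  define a0 where "a0 = Arg A"
  define b0 where "b0 = Arg B"
  define d0 where "d0 = Arg \<delta>0"
  define k where "k = dd/2 - \<alpha>"
  define t :: "int \<Rightarrow> real" where "t n = (if 0 \<le> n then of_int n * k else of_int n * k + a0 - \<alpha>)" for n
  define f :: "int \<Rightarrow> real" where "f n = (if n = 0 then a0 - \<beta> else t n + \<alpha> - \<beta>)" for n
  define W where "W n = Wm (cis (t n)) (cis (f n)) (a n) (b n)" for n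
  define th where "th = dd/2"
  define \<nu>1 where "\<nu>1 = b0 - \<beta>"
  define \<nu>2 where "\<nu>2 = - dd + \<beta> - b0 + d0"
  define rpm where "rpm = cmod x"
  define r0 where "r0 = cmod A"
  have px: "x = complex_of_real (cmod x) * cis \<alpha>" unfolding \<alpha>_def by (rule polar)
  have py: "y = complex_of_real (cmod y) * cis \<beta>" unfolding \<beta>_def by (rule polar)
  have pA: "A = complex_of_real (cmod A) * cis a0" unfolding a0_def by (rule polar)
  have pB: "B = complex_of_real (cmod B) * cis b0" unfolding b0_def by (rule polar)
  have pd: "\<delta> = cis dd" using polar[of \<delta>] g(4) unfolding dd_def by simp
  have pd0: "\<delta>0 = cis d0" using polar[of \<delta>0] g0(4) unfolding d0_def by simp
  have pz: "z = complex_of_real (cmod y) * cis (dd - \<beta> + pi)"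
  proof -
    have "z = - (complex_of_real (cmod y) * cis (- \<beta>) * cis dd)"
      using g(2) cnj_polar[of y] pd unfolding \<beta>_def by simp
    also have "\<dots> = - (complex_of_real (cmod y) * cis (dd - \<beta>))" by (simp add: cis_mult mult.assoc)
    finally show ?thesis by (simp add: minus_polar)
  qed
  have pw: "w = complex_of_real (cmod x) * cis (dd - \<alpha>)"
  proof -
    have "w = complex_of_real (cmod x) * cis (- \<alpha>) * cis dd"
      using g(3) cnj_polar[of x] pd unfolding \<alpha>_def by simp
    thus ?thesis by (simp add: cis_mult mult.assoc)
  qed
  have pC: "C = complex_of_real (cmod B) * cis (d0 - b0 + pi)"
  proof -
    have "C = - (complex_of_real (cmod B) * cis (- b0) * cis d0)"
      using g0(2) cnj_polar[of B] pd0 unfolding b0_def by simp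
    also have "\<dots> = - (complex_of_real (cmod B) * cis (d0 - b0))" by (simp add: cis_mult mult.assoc)
    finally show ?thesis by (simp add: minus_polar)
  qed
  have pD: "D = complex_of_real (cmod A) * cis (d0 - a0)"
  proof -
    have "D = complex_of_real (cmod A) * cis (- a0) * cis d0"
      using g0(3) cnj_polar[of A] pd0 unfolding a0_def by simp
    thus ?thesis by (simp add: cis_mult mult.assoc)
  qed
  have sf: "sfun rpm = cmod y" "sfun r0 = cmod B"
    unfolding rpm_def r0_def using sfun_eq g(1) g0(1) by auto
  have rng: "0 \<le> rpm" "rpm \<le> 1" "0 \<le> r0" "r0 \<le> 1"
  proof -
    show "0 \<le> rpm" "0 \<le> r0" by (simp_all add: rpm_def r0_def)
    have "rpm^2 \<le> 1" "r0^2 \<le> 1" using g(1) g0(1) unfolding rpm_def r0_def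
      by (smt (verit) zero_le_power2)+
    thus "rpm \<le> 1" "r0 \<le> 1" using \<open>0 \<le> rpm\<close> \<open>0 \<le> r0\<close> by (simp_all add: power_le_one_iff abs_square_le_1)
  qed
  have aa: "cinner (a n) (a n) = 1" "cinner (b n) (b n) = 1" "cinner (b n) (a n) = 0"
      "cinner (a n) (b n) = 0" for n
    using ab[of n] onb2_ba[OF ab[of n]] by (auto simp: onb2_def)
  have Wa: "W n *v a n = cis (t n) *s e1" "W n *v b n = cis (f n) *s e2" for n
    by (simp_all add: vec_eq2 W_def Wm_mv aa)
  have Wv: "(W n *v v) $ 1 = cis (t n) * cinner (a n) v" "(W n *v v) $ 2 = cis (f n) * cinner (b n) v" for n v
    by (simp_all add: W_def Wm_mv)
  have tstep: "t m = t (m - 1) + k" if "m \<noteq> 0" for m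
    using that unfolding t_def by (auto simp: algebra_simps)
  have t0: "t 0 = 0" and tm1: "t (-1) = - k + a0 - \<alpha>" and t1: "t 1 = k"
    unfolding t_def by simp_all
  have fnz: "f m = t m + \<alpha> - \<beta>" if "m \<noteq> 0" for m using that unfolding f_def by simp
  have f0: "f 0 = a0 - \<beta>" unfolding f_def by simp
  have kk: "th = k + \<alpha>" unfolding th_def k_def by simp
  have eqn: "mat (cis th) ** W n ** U n m ** adj (W m) = Ustd rpm r0 \<nu>1 \<nu>2 n m" for n m
  proof -
    consider (c) "n = m - 1" | (d) "n = m + 1" | (o) "n \<noteq> m - 1" "n \<noteq> m + 1" by blast
    thus ?thesis
    proof cases
      case c
      hence L: "mat (cis th) ** W n ** U n m ** adj (W m) =
          ketbra e1 (cnj (cis (t n)) *s (cnj (cis th) *s (W m *v c m)))"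
        by (simp add: U lhs_form Wa ketbra_smult)
      show ?thesis
      proof (cases "m = 0")
        case True
        have R: "Ustd rpm r0 \<nu>1 \<nu>2 n m = ketbra e1 (of_real r0 *s e1 + (cis \<nu>1 * of_real (sfun r0)) *s e2)"
          using c True by (simp add: Ustd_def)
        show ?thesis unfolding L R
        proof (rule arg_cong[where f="ketbra e1"], simp only: vec_eq2, intro conjI)
          show "(cnj (cis (t n)) *s (cnj (cis th) *s (W m *v c m))) $ 1 = (of_real r0 *s e1 + (cis \<nu>1 * of_real (sfun r0)) *s e2) $ 1"
          proof -
          have "(cnj (cis (t n)) *s (cnj (cis th) *s (W m *v c m))) $ 1 = cnj (cis (t n)) * (cnj (cis th) * (cis (t m) * A))"
            using c True by (simp add: Wv A_def)
          also have "\<dots> = complex_of_real (cmod A) * cis (0)"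
              by (rule phase_eq2[OF pA refl]) (use c True in \<open>simp_all add: r0_def t_def th_def k_def\<close>)
          finally show ?thesis by (simp add: r0_def t_def th_def k_def)
          qed
          show "(cnj (cis (t n)) *s (cnj (cis th) *s (W m *v c m))) $ 2 = (of_real r0 *s e1 + (cis \<nu>1 * of_real (sfun r0)) *s e2) $ 2"
          proof -
          have "(cnj (cis (t n)) *s (cnj (cis th) *s (W m *v c m))) $ 2 = cnj (cis (t n)) * (cnj (cis th) * (cis (f m) * B))"
            using c True by (simp add: Wv B_def)
          also have "\<dots> = complex_of_real (cmod B) * cis (\<nu>1)"
              by (rule phase_eq2[OF pB refl]) (use c True in \<open>simp_all add: sf mult.commute t_def f_def th_def k_def \<nu>1_def\<close>)
          finally show ?thesis by (simp add: sf  t_def f_def th_def k_def \<nu>1_def)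
          qed
        qed
      next
        case False
        have R: "Ustd rpm r0 \<nu>1 \<nu>2 n m = ketbra e1 (of_real rpm *s e1 + of_real (sfun rpm) *s e2)"
          using c False by (simp add: Ustd_def)
        show ?thesis unfolding L R
        proof (rule arg_cong[where f="ketbra e1"], simp only: vec_eq2, intro conjI)
          show "(cnj (cis (t n)) *s (cnj (cis th) *s (W m *v c m))) $ 1 = (of_real rpm *s e1 + of_real (sfun rpm) *s e2) $ 1"
          proof -
          have "(cnj (cis (t n)) *s (cnj (cis th) *s (W m *v c m))) $ 1 = cnj (cis (t n)) * (cnj (cis th) * (cis (t m) * x))"
            using c False by (simp add: Wv bk[OF False] x_def)
          also have "\<dots> = complex_of_real (cmod x) * cis (0)"
              by (rule phase_eq2[OF px refl]) (use c False in \<open>simp_all add: rpm_def tstep[OF False] k_def th_def\<close>)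
          finally show ?thesis by (simp add: rpm_def tstep[OF False] kk)
          qed
          show "(cnj (cis (t n)) *s (cnj (cis th) *s (W m *v c m))) $ 2 = (of_real rpm *s e1 + of_real (sfun rpm) *s e2) $ 2"
          proof -
          have "(cnj (cis (t n)) *s (cnj (cis th) *s (W m *v c m))) $ 2 = cnj (cis (t n)) * (cnj (cis th) * (cis (f m) * y))"
            using c False by (simp add: Wv bk[OF False] y_def)
          also have "\<dots> = complex_of_real (cmod y) * cis (0)"
              by (rule phase_eq2[OF py refl]) (use c False in \<open>simp_all add: sf fnz[OF False] tstep[OF False] k_def th_def\<close>)
          finally show ?thesis by (simp add: sf fnz[OF False] tstep[OF False] kk)
          qed
        qed
      qed
    next
      case d
      hence nd: "n \<noteq> m - 1" by simp
      hence L: "mat (cis th) ** W n ** U n m ** adj (W m) =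
          ketbra e2 (cnj (cis (f n)) *s (cnj (cis th) *s (W m *v d m)))"
        using d by (simp add: U lhs_form Wa ketbra_smult)
      show ?thesis
      proof (cases "m = 0")
        case True
        have R: "Ustd rpm r0 \<nu>1 \<nu>2 n m = ketbra e2 ((- cis \<nu>2 * of_real (sfun r0)) *s e1 + (cis (\<nu>1 + \<nu>2) * of_real r0) *s e2)"
          using d True by (simp add: Ustd_def)
        have T1: "- cis \<nu>2 * of_real (sfun r0) = complex_of_real (cmod B) * cis (\<nu>2 + pi)"
          by (simp add: sf minus_cis[symmetric] mult.commute)
        have T2: "cis (\<nu>1 + \<nu>2) * of_real r0 = complex_of_real (cmod A) * cis (\<nu>1 + \<nu>2)"
          by (simp add: r0_def mult.commute)
        show ?thesis unfolding L R
        proof (rule arg_cong[where f="ketbra e2"], simp only: vec_eq2, intro conjI)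
          show "(cnj (cis (f n)) *s (cnj (cis th) *s (W m *v d m))) $ 1 = ((- cis \<nu>2 * of_real (sfun r0)) *s e1 + (cis (\<nu>1 + \<nu>2) * of_real r0) *s e2) $ 1"
          proof -
          have "(cnj (cis (f n)) *s (cnj (cis th) *s (W m *v d m))) $ 1 = cnj (cis (f n)) * (cnj (cis th) * (cis (t m) * C))"
            using d True by (simp add: Wv C_def)
          also have "\<dots> = - cis \<nu>2 * of_real (sfun r0)"
              by (rule phase_eq2[OF pC T1]) (use d True in \<open>simp_all add: fnz t1 t0 k_def \<nu>2_def th_def\<close>)
          finally show ?thesis by simp
          qed
          show "(cnj (cis (f n)) *s (cnj (cis th) *s (W m *v d m))) $ 2 = ((- cis \<nu>2 * of_real (sfun r0)) *s e1 + (cis (\<nu>1 + \<nu>2) * of_real r0) *s e2) $ 2"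
          proof -
          have "(cnj (cis (f n)) *s (cnj (cis th) *s (W m *v d m))) $ 2 = cnj (cis (f n)) * (cnj (cis th) * (cis (f m) * D))"
            using d True by (simp add: Wv D_def)
          also have "\<dots> = cis (\<nu>1 + \<nu>2) * of_real r0"
              by (rule phase_eq2[OF pD T2]) (use d True in \<open>simp_all add: fnz f0 t1 k_def \<nu>1_def \<nu>2_def th_def\<close>)
          finally show ?thesis by simp
          qed
        qed
      next
        case False
        have R: "Ustd rpm r0 \<nu>1 \<nu>2 n m = ketbra e2 ((- of_real (sfun rpm)) *s e1 + of_real rpm *s e2)"
          using d False by (simp add: Ustd_def)
        have T1: "- complex_of_real (sfun rpm) = complex_of_real (cmod y) * cis pi"
          by (simp add: sf)
        have T2: "complex_of_real rpm = complex_of_real (cmod x) * cis 0"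
          by (simp add: rpm_def)
        have fn: "f (m + 1) = t m + k + \<alpha> - \<beta>"
        proof (cases "m = -1")
          case True thus ?thesis using d by (simp add: f0 tm1 k_def)
        next
          case False thus ?thesis using d tstep[of "m+1"] fnz[of "m+1"] by simp
        qed
        have fm: "f m = t m + \<alpha> - \<beta>" using False fnz by simp
        show ?thesis unfolding L R
        proof (rule arg_cong[where f="ketbra e2"], simp only: vec_eq2, intro conjI)
          show "(cnj (cis (f n)) *s (cnj (cis th) *s (W m *v d m))) $ 1 = ((- of_real (sfun rpm)) *s e1 + of_real rpm *s e2) $ 1"
          proof -
          have "(cnj (cis (f n)) *s (cnj (cis th) *s (W m *v d m))) $ 1 = cnj (cis (f n)) * (cnj (cis th) * (cis (t m) * z))"
            using d False by (simp add: Wv bk[OF False] z_def)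
          also have "\<dots> = - complex_of_real (sfun rpm)"
              by (rule phase_eq2[OF pz T1]) (use d False in \<open>simp_all add: fn k_def th_def\<close>)
          finally show ?thesis by simp
          qed
          show "(cnj (cis (f n)) *s (cnj (cis th) *s (W m *v d m))) $ 2 = ((- of_real (sfun rpm)) *s e1 + of_real rpm *s e2) $ 2"
          proof -
          have "(cnj (cis (f n)) *s (cnj (cis th) *s (W m *v d m))) $ 2 = cnj (cis (f n)) * (cnj (cis th) * (cis (f m) * w))"
            using d False by (simp add: Wv bk[OF False] w_def)
          also have "\<dots> = complex_of_real rpm"
              by (rule phase_eq2[OF pw T2]) (use d False in \<open>simp_all add: fn fm k_def th_def\<close>)
          finally show ?thesis by simp
          qed
        qed
      qed
    next
      case o
      thus ?thesis by (simp add: U Ustd_def)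
    qed
  qed
  have un: "unitary2 (W n)" for n
    unfolding W_def by (rule Wm_unitary[OF ab]) simp_all
  have ue: "unit_equiv U (Ustd rpm r0 \<nu>1 \<nu>2)"
    unfolding unit_equiv_def
    by (rule exI[of _ th], rule exI[of _ W]) (simp add: un eqn)
  show ?thesis
    by (rule exI[of _ rpm], rule exI[of _ r0], rule exI[of _ \<nu>1], rule exI[of _ \<nu>2])
      (simp add: rng ue)
qed



definition cv :: "real \<Rightarrow> real \<Rightarrow> real \<Rightarrow> real \<Rightarrow> int \<Rightarrow> complex^2" where
  "cv r r0 \<nu>1 \<nu>2 n = (if n = 0 then of_real r0 *s e1 + (cis \<nu>1 * of_real (sfun r0)) *s e2
     else of_real r *s e1 + of_real (sfun r) *s e2)"
definition dv :: "real \<Rightarrow> real \<Rightarrow> real \<Rightarrow> real \<Rightarrow> int \<Rightarrow> complex^2" where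
  "dv r r0 \<nu>1 \<nu>2 n = (if n = 0 then (- cis \<nu>2 * of_real (sfun r0)) *s e1 + (cis (\<nu>1 + \<nu>2) * of_real r0) *s e2
     else (- of_real (sfun r)) *s e1 + of_real r *s e2)"

lemma Ustd_c: "Ustd r r0 \<nu>1 \<nu>2 n (n + 1) = ketbra e1 (cv r r0 \<nu>1 \<nu>2 (n + 1))"
  by (simp add: Ustd_def cv_def)
lemma Ustd_d: "Ustd r r0 \<nu>1 \<nu>2 (n + 1) n = ketbra e2 (dv r r0 \<nu>1 \<nu>2 n)"
  by (simp add: Ustd_def dv_def)

lemma ketbra_eq_entry: "ketbra u v = ketbra u' v' \<Longrightarrow> u$i * cnj (v$j) = u'$i * cnj (v'$j)"
  by (metis ketbra_entry)

lemma unit_of_cnj: "cnj z * z = 1 \<Longrightarrow> cmod z = 1"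
proof -
  assume "cnj z * z = 1"
  hence "(cmod z)^2 = 1" unfolding cnj_mult_self by (metis of_real_eq_1_iff)
  thus ?thesis by (smt (verit) norm_ge_zero power2_eq_1_iff)
qed

lemma unit_real_eq:
  assumes "cmod u = 1" "u * complex_of_real r = complex_of_real r'" "0 < r" "0 \<le> r'"
  shows "r = r'" "u = 1"
proof -
  have "cmod (u * complex_of_real r) = cmod (complex_of_real r')" using assms(2) by simp
  hence "\<bar>r\<bar> = \<bar>r'\<bar>" using assms(1) by (simp add: norm_mult)
  thus "r = r'" using assms(3,4) by simp
  with assms(2,3) show "u = 1" by simp
qed

lemma cis_inj_02pi:
  assumes "a \<in> {0..<2*pi}" "b \<in> {0..<2*pi}" "cis a = cis b"
  shows "a = b"
proof -
  have "cis (pi - a) = cis (pi - b)"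
    using assms(3) by (metis cis_divide)
  hence "Arg (cis (pi - a)) = Arg (cis (pi - b))" by simp
  moreover have "Arg (cis (pi - a)) = pi - a"
    by (rule cis_Arg_unique) (use assms(1) in \<open>auto simp: sgn_if\<close>)
  moreover have "Arg (cis (pi - b)) = pi - b"
    by (rule cis_Arg_unique) (use assms(2) in \<open>auto simp: sgn_if\<close>)
  ultimately show ?thesis by simp
qed

lemma sfun_pos: "0 < r \<Longrightarrow> r < 1 \<Longrightarrow> 0 < sfun r"
  unfolding sfun_def by (simp add: power_less_one_iff abs_square_less_1)

lemma part2_dir:
  assumes r: "0 < rpm" "rpm < 1" "0 < r0" "r0 < 1" "0 < rpm'" "rpm' < 1" "0 < r0'" "r0' < 1"
    and nu: "\<nu>1 \<in> {0..<2*pi}" "\<nu>2 \<in> {0..<2*pi}" "\<nu>1' \<in> {0..<2*pi}" "\<nu>2' \<in> {0..<2*pi}"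
    and ue: "unit_equiv (Ustd rpm r0 \<nu>1 \<nu>2) (Ustd rpm' r0' \<nu>1' \<nu>2')"
  shows "rpm = rpm' \<and> r0 = r0' \<and> \<nu>1 = \<nu>1' \<and> \<nu>2 = \<nu>2'"
proof -
  obtain th W where un: "\<And>n. unitary2 (W n)" and
    eq: "\<And>n m. mat (cis th) ** W n ** Ustd rpm r0 \<nu>1 \<nu>2 n m ** adj (W m) = Ustd rpm' r0' \<nu>1' \<nu>2' n m"
    using ue unfolding unit_equiv_def by blast
  define a where "a = cis (- th)"
  define cc where "cc = cv rpm r0 \<nu>1 \<nu>2"
  define cc' where "cc' = cv rpm' r0' \<nu>1' \<nu>2'"
  define dd where "dd = dv rpm r0 \<nu>1 \<nu>2"
  define dd' where "dd' = dv rpm' r0' \<nu>1' \<nu>2'"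
  have ha: "cmod a = 1" by (simp add: a_def)
  have E1: "(W n *v e1)$i * cnj ((cnj (cis th) *s (W (n+1) *v cc (n+1)))$j) = e1$i * cnj (cc' (n+1) $ j)" for n i j
    using eq[of n "n+1"] unfolding Ustd_c lhs_form cc_def cc'_def by (rule ketbra_eq_entry)
  have E2: "(W (n+1) *v e2)$i * cnj ((cnj (cis th) *s (W n *v dd n))$j) = e2$i * cnj (dd' n $ j)" for n i j
    using eq[of "n+1" n] unfolding Ustd_d lhs_form dd_def dd'_def by (rule ketbra_eq_entry)
  have cc'1: "cc' n $ 1 \<noteq> 0" for n using r by (simp add: cc'_def cv_def)
  have dd'2: "dd' n $ 2 \<noteq> 0" for n using r by (simp add: dd'_def dv_def)
  have W21: "W n $ 2 $ 1 = 0" for n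
  proof -
    define V where "V = cnj ((cnj (cis th) *s (W (n+1) *v cc (n+1)))$1)"
    have "W n $ 1 $ 1 * V = cnj (cc' (n+1) $ 1)" using E1[of n 1 1] by (simp add: V_def mv2)
    hence "V \<noteq> 0" using cc'1[of "n+1"] by auto
    moreover have "W n $ 2 $ 1 * V = 0" using E1[of n 2 1] by (simp add: V_def mv2)
    ultimately show ?thesis by simp
  qed
  have W12: "W n $ 1 $ 2 = 0" for n
  proof -
    define V where "V = cnj ((cnj (cis th) *s (W (n-1) *v dd (n-1)))$2)"
    have "W n $ 2 $ 2 * V = cnj (dd' (n-1) $ 2)" using E2[of "n-1" 2 2] by (simp add: V_def mv2)
    hence "V \<noteq> 0" using dd'2[of "n-1"] by auto
    moreover have "W n $ 1 $ 2 * V = 0" using E2[of "n-1" 1 2] by (simp add: V_def mv2)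
    ultimately show ?thesis by simp
  qed
  define \<theta> where "\<theta> n = W n $ 1 $ 1" for n
  define \<phi> where "\<phi> n = W n $ 2 $ 2" for n
  have uu: "cmod (\<theta> n) = 1" "cmod (\<phi> n) = 1" for n
  proof -
    have "adj (W n) ** W n = mat 1" using un[of n] by (simp add: unitary2_def)
    hence "(adj (W n) ** W n) $ 1 $ 1 = 1" "(adj (W n) ** W n) $ 2 $ 2 = 1" by (simp_all add: mat_entry)
    hence "cnj (\<theta> n) * \<theta> n = 1" "cnj (\<phi> n) * \<phi> n = 1"
      by (simp_all add: mm2 W21 W12 \<theta>_def \<phi>_def)
    thus "cmod (\<theta> n) = 1" "cmod (\<phi> n) = 1" by (simp_all add: unit_of_cnj)
  qed
  have uc: "cnj (\<theta> n) * \<theta> n = 1" "cnj (\<phi> n) * \<phi> n = 1" for n using uu unit_cnj by blast+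
  have Wv: "(W n *v v) $ 1 = \<theta> n * v $ 1" "(W n *v v) $ 2 = \<phi> n * v $ 2" for n v
    by (simp_all add: mv2 W21 W12 \<theta>_def \<phi>_def)
  have C1: "cnj (\<theta> n) * (a * (\<theta> (n+1) * cc (n+1) $ 1)) = cc' (n+1) $ 1" for n
  proof -
    have "\<theta> n * cnj (cnj (cis th) * (\<theta> (n+1) * cc (n+1) $ 1)) = cnj (cc' (n+1) $ 1)"
      using E1[of n 1 1] by (simp add: Wv)
    from arg_cong[OF this, of cnj] show ?thesis by (simp add: a_def cis_cnj)
  qed
  have C2: "cnj (\<theta> n) * (a * (\<phi> (n+1) * cc (n+1) $ 2)) = cc' (n+1) $ 2" for n
  proof -
    have "\<theta> n * cnj (cnj (cis th) * (\<phi> (n+1) * cc (n+1) $ 2)) = cnj (cc' (n+1) $ 2)"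
      using E1[of n 1 2] by (simp add: Wv)
    from arg_cong[OF this, of cnj] show ?thesis by (simp add: a_def cis_cnj)
  qed
  have D1: "cnj (\<phi> (n+1)) * (a * (\<theta> n * dd n $ 1)) = dd' n $ 1" for n
  proof -
    have "\<phi> (n+1) * cnj (cnj (cis th) * (\<theta> n * dd n $ 1)) = cnj (dd' n $ 1)"
      using E2[of n 2 1] by (simp add: Wv)
    from arg_cong[OF this, of cnj] show ?thesis by (simp add: a_def cis_cnj)
  qed
  have n3: "cmod (cnj x * (a * y)) = 1" if "cmod x = 1" "cmod y = 1" for x y
    using that ha by (simp add: norm_mult)
  have prod: "(cnj x * (a * y)) * (cnj y * (a * x)) = a * a * (cnj x * x) * (cnj y * y)" for x y
    by (simp add: ac_simps)
  have sp: "0 < sfun rpm" "0 < sfun r0" using sfun_pos r by auto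
  have e1: "(cnj (\<theta> 0) * (a * \<theta> 1)) * of_real rpm = of_real rpm'"
    using C1[of 0] by (simp add: cc_def cc'_def cv_def mult.assoc)
  have rr: "rpm = rpm'" using unit_real_eq(1)[OF n3[OF uu(1) uu(1)] e1 r(1)] r(5) by simp
  have e2: "(cnj (\<theta> 0) * (a * \<phi> 1)) * of_real (sfun rpm) = of_real (sfun rpm)"
    using C2[of 0] rr by (simp add: cc_def cc'_def cv_def mult.assoc)
  have b1: "cnj (\<theta> 0) * (a * \<phi> 1) = 1" using unit_real_eq(2)[OF n3[OF uu(1) uu(2)] e2 sp(1)] sp(1) by simp
  have e3: "(cnj (\<theta> 1) * (a * \<phi> 2)) * of_real (sfun rpm) = of_real (sfun rpm)"
    using C2[of 1] rr by (simp add: cc_def cc'_def cv_def mult.assoc)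
  have b2: "cnj (\<theta> 1) * (a * \<phi> 2) = 1" using unit_real_eq(2)[OF n3[OF uu(1) uu(2)] e3 sp(1)] sp(1) by simp
  have e4: "(cnj (\<phi> 2) * (a * \<theta> 1)) * of_real (sfun rpm) = of_real (sfun rpm)"
    using D1[of 1] rr by (simp add: dd_def dd'_def dv_def mult.assoc)
  have c1: "cnj (\<phi> 2) * (a * \<theta> 1) = 1" using unit_real_eq(2)[OF n3[OF uu(2) uu(1)] e4 sp(1)] sp(1) by simp
  have e5: "(cnj (\<phi> 0) * (a * \<theta> (-1))) * of_real (sfun rpm) = of_real (sfun rpm)"
    using D1[of "-1"] rr by (simp add: dd_def dd'_def dv_def mult.assoc)
  have cm1: "cnj (\<phi> 0) * (a * \<theta> (-1)) = 1" using unit_real_eq(2)[OF n3[OF uu(2) uu(1)] e5 sp(1)] sp(1) by simp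
  have aa: "a * a = 1" using prod[of "\<theta> 1" "\<phi> 2"] b2 c1 uc by simp
  have e6: "(cnj (\<theta> (-1)) * (a * \<theta> 0)) * of_real r0 = of_real r0'"
    using C1[of "-1"] by (simp add: cc_def cc'_def cv_def mult.assoc)
  have r0r: "r0 = r0'" using unit_real_eq(1)[OF n3[OF uu(1) uu(1)] e6 r(3)] r(7) by simp
  have X1: "cnj (\<theta> (-1)) * (a * \<phi> 0) = 1" using prod[of "\<theta> (-1)" "\<phi> 0"] cm1 aa uc by simp
  have X2: "cnj (\<phi> 1) * (a * \<theta> 0) = 1" using prod[of "\<phi> 1" "\<theta> 0"] b1 aa uc by simp
  have e7: "(cnj (\<theta> (-1)) * (a * \<phi> 0)) * (cis \<nu>1 * of_real (sfun r0)) = cis \<nu>1' * of_real (sfun r0)"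
    using C2[of "-1"] r0r by (simp add: cc_def cc'_def cv_def mult.assoc)
  hence "cis \<nu>1 = cis \<nu>1'" using X1 sp(2) by simp
  hence n1: "\<nu>1 = \<nu>1'" using cis_inj_02pi nu(1,3) by blast
  have e8: "(cnj (\<phi> 1) * (a * \<theta> 0)) * (cis \<nu>2 * of_real (sfun r0)) = cis \<nu>2' * of_real (sfun r0)"
    using D1[of 0] r0r by (simp add: dd_def dd'_def dv_def mult.assoc)
  hence "cis \<nu>2 = cis \<nu>2'" using X2 sp(2) by simp
  hence n2: "\<nu>2 = \<nu>2'" using cis_inj_02pi nu(2,4) by blast
  show ?thesis using rr r0r n1 n2 by simp
qed


lemma adj_mat1: "adj (mat 1 :: complex^2^2) = mat 1"
  by (simp add: mat_eq2 mat_entry)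

lemma unit_equiv_refl: "unit_equiv U U"
proof -
  have "unitary2 (mat 1)" by (simp add: unitary2_def adj_mat1)
  moreover have "mat (cis 0) ** mat 1 ** U n m ** adj (mat 1) = U n m" for n m
    by (simp add: adj_mat1)
  ultimately show ?thesis unfolding unit_equiv_def
    by (intro exI[of _ 0] exI[of _ "\<lambda>_. mat 1"]) simp
qed

theorem corollary2p11:
  shows "(\<forall>U. qw_one_defect U \<longrightarrow>
            (\<exists>rpm r0 \<nu>1 \<nu>2. 0 \<le> rpm \<and> rpm \<le> 1 \<and> 0 \<le> r0 \<and> r0 \<le> 1 \<and>
                unit_equiv U (Ustd rpm r0 \<nu>1 \<nu>2)))
       \<and> (\<forall>rpm r0 \<nu>1 \<nu>2 rpm' r0' \<nu>1' \<nu>2'.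
            0 < rpm \<and> rpm < 1 \<and> 0 < r0 \<and> r0 < 1 \<and>
            0 < rpm' \<and> rpm' < 1 \<and> 0 < r0' \<and> r0' < 1 \<and>
            \<nu>1 \<in> {0..<2*pi} \<and> \<nu>2 \<in> {0..<2*pi} \<and> \<nu>1' \<in> {0..<2*pi} \<and> \<nu>2' \<in> {0..<2*pi} \<longrightarrow>
            (unit_equiv (Ustd rpm r0 \<nu>1 \<nu>2) (Ustd rpm' r0' \<nu>1' \<nu>2') \<longleftrightarrow>
             rpm = rpm' \<and> r0 = r0' \<and> \<nu>1 = \<nu>1' \<and> \<nu>2 = \<nu>2'))"
  proof (intro conjI allI impI)
  fix U assume "qw_one_defect U"
  thus "\<exists>rpm r0 \<nu>1 \<nu>2. 0 \<le> rpm \<and> rpm \<le> 1 \<and> 0 \<le> r0 \<and> r0 \<le> 1 \<and>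
                unit_equiv U (Ustd rpm r0 \<nu>1 \<nu>2)" by (rule part1)
next
  fix rpm r0 \<nu>1 \<nu>2 rpm' r0' \<nu>1' \<nu>2' :: real
  assume h: "0 < rpm \<and> rpm < 1 \<and> 0 < r0 \<and> r0 < 1 \<and>
            0 < rpm' \<and> rpm' < 1 \<and> 0 < r0' \<and> r0' < 1 \<and>
            \<nu>1 \<in> {0..<2*pi} \<and> \<nu>2 \<in> {0..<2*pi} \<and> \<nu>1' \<in> {0..<2*pi} \<and> \<nu>2' \<in> {0..<2*pi}"
  show "unit_equiv (Ustd rpm r0 \<nu>1 \<nu>2) (Ustd rpm' r0' \<nu>1' \<nu>2') \<longleftrightarrow>
             rpm = rpm' \<and> r0 = r0' \<and> \<nu>1 = \<nu>1' \<and> \<nu>2 = \<nu>2'"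
  proof
    assume ue: "unit_equiv (Ustd rpm r0 \<nu>1 \<nu>2) (Ustd rpm' r0' \<nu>1' \<nu>2')"
    from h show "rpm = rpm' \<and> r0 = r0' \<and> \<nu>1 = \<nu>1' \<and> \<nu>2 = \<nu>2'"
      by (elim conjE) (rule part2_dir[OF _ _ _ _ _ _ _ _ _ _ _ _ ue])
  next
    assume "rpm = rpm' \<and> r0 = r0' \<and> \<nu>1 = \<nu>1' \<and> \<nu>2 = \<nu>2'"
    thus "unit_equiv (Ustd rpm r0 \<nu>1 \<nu>2) (Ustd rpm' r0' \<nu>1' \<nu>2')" by (simp add: unit_equiv_refl)
  qed
qed

end
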